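(* Let $P$ be the program with a single integer-valued program variable $n$ and no random variables: $n:=1$; while $n\ge1$ do if prob($\tfrac12$) then $n:=n+1$ else $n:=n-1$; $n:=n-1$ fi od. Then $P$ terminates almost surely and its expected termination time $\mathsf{ET}(P)$ (the expected value of $T$ in its stochastic game structure $\mathcal{G}_P$; there are no schedulers since there is no nondeterminism) is an irrational number.
   Context: The stochastic game structure $\mathcal{G}_P$ is built inductively: an assignment $x:=e$ gives two deterministic locations $\ell^{in},\ell^{out}$ and one transition $\ell^{in}\to\ell^{out}$ performing the update; a sequence $Q_1;Q_2$ identifies $\ell^{out}_{Q_1}$ with $\ell^{in}_{Q_2}$; a loop "while $\phi$ do $Q$ od" adds a deterministic location $\ell^{in}$ identified with $\ell^{out}_Q$, a new location $\ell^{out}$, and identity transitions $\ell^{in}\to\ell^{in}_Q$ with guard $\phi$ and $\ell^{in}\to\ell^{out}$ with guard $\neg\phi$; "if prob($p$) then $Q_1$ else $Q_2$ fi" adds a probabilistic location $\ell^{in}$ with identity transitions to $\ell^{in}_{Q_1}$ (probability $p$) and $\ell^{in}_{Q_2}$ (probability $1-p$), and identifies $\ell^{out}_{Q_1},\ell^{out}_{Q_2}$ with the statement's $\ell^{out}$. The program's final $\ell^{out}$ is the terminal location $\ell_{out}$ (with a self-loop). A run $c_1c_2\cdots$ starts at $c_1$ = (initial location, initial valuation) and each step follows one transition; $T=\min\{n:\text{the location of }c_n\text{ is }\ell_{out}\}$. *)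

theory Defs
  imports "HOL-Probability.Probability"
begin

text \<open>Stochastic game structure G_P of the program
  n:=1; while n>=1 do if prob(1/2) then n:=n+1 else n:=n-1; n:=n-1 fi od
  built by the inductive construction:
  L0 = in of (n:=1); L1 = out of (n:=1) = in of while = out of loop body;
  L2 = probabilistic in of the if; L3 = in of (n:=n+1) (out = L1);
  L4 = in of (n:=n-1), L5 = its out = in of second (n:=n-1) (out = L1);
  Lout = out of while = terminal location (self-loop).
  All locations other than L2 are deterministic; there is no nondeterminism,
  hence no scheduler.\<close>

datatype loc = L0 | L1 | L2 | L3 | L4 | L5 | Lout

type_synonym conf = "loc \<times> int"

fun step :: "conf \<Rightarrow> conf pmf" where
  "step (L0, n) = return_pmf (L1, 1)"
| "step (L1, n) = (if n \<ge> 1 then return_pmf (L2, n) else return_pmf (Lout, n))"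
| "step (L2, n) = map_pmf (\<lambda>b. if b then (L3, n) else (L4, n)) (bernoulli_pmf (1/2))"
| "step (L3, n) = return_pmf (L1, n + 1)"
| "step (L4, n) = return_pmf (L5, n - 1)"
| "step (L5, n) = return_pmf (L1, n - 1)"
| "step (Lout, n) = return_pmf (Lout, n)"

fun run_prefix :: "int \<Rightarrow> nat \<Rightarrow> conf list pmf" where
  "run_prefix n0 0 = return_pmf [(L0, n0)]"
| "run_prefix n0 (Suc k) =
     bind_pmf (run_prefix n0 k) (\<lambda>xs. map_pmf (\<lambda>c. xs @ [c]) (step (last xs)))"

text \<open>P(T = k+1), where T = min {n. location of c_n is Lout}.\<close>
definition T_prob :: "int \<Rightarrow> nat \<Rightarrow> real" where
  "T_prob n0 k = measure_pmf.prob (run_prefix n0 k)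
     {xs. fst (xs ! k) = Lout \<and> (\<forall>i<k. fst (xs ! i) \<noteq> Lout)}"

definition terminates_as :: "int \<Rightarrow> bool" where
  "terminates_as n0 \<longleftrightarrow> (\<Sum>k. ennreal (T_prob n0 k)) = 1"

text \<open>Expected termination time E[T], with T taking values in N \<union> {infinity}.\<close>
definition ET :: "int \<Rightarrow> ennreal" where
  "ET n0 = (\<Sum>k. ennreal (real (Suc k) * T_prob n0 k))
           + \<top> * (1 - (\<Sum>k. ennreal (T_prob n0 k)))"

end

theory Submission
  imports Defs "HOL-Computational_Algebra.Primes" "HOL-Real_Asymp.Real_Asymp"
begin



definition X :: "int \<Rightarrow> nat \<Rightarrow> conf pmf" where
  "X n0 k = map_pmf last (run_prefix n0 k)"

lemma rp_supp:
  "xs \<in> set_pmf (run_prefix n0 k) \<Longrightarrow>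
    length xs = Suc k \<and> xs ! 0 = (L0, n0) \<and> (\<forall>i<k. xs ! Suc i \<in> set_pmf (step (xs ! i)))"
proof (induction k arbitrary: xs)
  case 0 then show ?case by simp
next
  case (Suc k)
  from Suc.prems obtain ys c where ys: "ys \<in> set_pmf (run_prefix n0 k)"
     and c: "c \<in> set_pmf (step (last ys))" and xs: "xs = ys @ [c]" by auto
  from Suc.IH[OF ys] have l: "length ys = Suc k" and h0: "ys ! 0 = (L0,n0)"
    and hs: "\<forall>i<k. ys ! Suc i \<in> set_pmf (step (ys ! i))" by auto
  have lastys: "last ys = ys ! k" using l by (subst last_conv_nth) auto
  show ?case
  proof (intro conjI allI impI)
    show "length xs = Suc (Suc k)" using xs l by simp
    show "xs ! 0 = (L0, n0)" using xs l h0 by (simp add: nth_append)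
    fix i assume i: "i < Suc k"
    show "xs ! Suc i \<in> set_pmf (step (xs ! i))"
    proof (cases "i < k")
      case True then show ?thesis using hs xs l by (simp add: nth_append)
    next
      case False then have "i = k" using i by simp
      then show ?thesis using xs l c lastys by (simp add: nth_append)
    qed
  qed
qed

lemma step_Lout: "c' \<in> set_pmf (step c) \<Longrightarrow> fst c = Lout \<Longrightarrow> fst c' = Lout"
  by (cases c) auto

lemma rp_absorb:
  assumes "xs \<in> set_pmf (run_prefix n0 k)" "i \<le> j" "j \<le> k" "fst (xs ! i) = Lout"
  shows "fst (xs ! j) = Lout"
  using assms(2-4)
proof (induction j rule: dec_induct)
  case base then show ?case by simp
next
  case (step m)
  then have "m < k" by simp
  then have "xs ! Suc m \<in> set_pmf (step (xs ! m))" using rp_supp[OF assms(1)] by auto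
  then show ?case using step_Lout step by auto
qed

lemma X_0: "X n0 0 = return_pmf (L0, n0)"
  by (simp add: X_def)

lemma X_Suc: "X n0 (Suc k) = bind_pmf (X n0 k) step"
  by (simp add: X_def map_bind_pmf bind_map_pmf map_pmf_comp)

definition indA :: "conf \<Rightarrow> ennreal" where
  "indA c = (case c of (L1, n) \<Rightarrow> (if n \<le> 0 then 1 else 0) | _ \<Rightarrow> 0)"

lemma T_prob_0: "T_prob n0 0 = 0"
  unfolding T_prob_def measure_pmf_zero_iff using rp_supp by fastforce

lemma emeas_Lout: "fst c \<noteq> Lout \<Longrightarrow> emeasure (measure_pmf (step c)) {c'. fst c' = Lout} = indA c"
  by (cases c rule: step.cases) (auto simp: indA_def)

lemma T_prob_Suc: "ennreal (T_prob n0 (Suc j)) = (\<integral>\<^sup>+c. indA c \<partial>X n0 j)"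
proof -
  let ?E = "{xs. fst (xs ! Suc j) = Lout \<and> (\<forall>i<Suc j. fst (xs ! i) \<noteq> Lout)}"
  have "ennreal (T_prob n0 (Suc j)) = emeasure (measure_pmf (run_prefix n0 (Suc j))) ?E"
    unfolding T_prob_def by (simp add: measure_pmf.emeasure_eq_measure)
  also have "\<dots> = (\<integral>\<^sup>+xs. emeasure (measure_pmf (step (last xs))) ((\<lambda>c. xs @ [c]) -` ?E) \<partial>run_prefix n0 j)"
    by simp
  also have "\<dots> = (\<integral>\<^sup>+xs. indA (last xs) \<partial>run_prefix n0 j)"
  proof (rule nn_integral_cong_AE, rule AE_pmfI)
    fix xs assume xs: "xs \<in> set_pmf (run_prefix n0 j)"
    note s = rp_supp[OF xs]
    have l: "last xs = xs ! j" using s by (subst last_conv_nth) auto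
    have pre: "(\<lambda>c. xs @ [c]) -` ?E = (if fst (last xs) = Lout then {} else {c. fst c = Lout})"
    proof (cases "fst (last xs) = Lout")
      case True then show ?thesis using s l by (auto simp: nth_append)
    next
      case False
      have "\<forall>i<Suc j. fst (xs ! i) \<noteq> Lout"
        using rp_absorb[OF xs, of _ j] False l less_Suc_eq_le by fastforce
      then show ?thesis using s l False by (auto simp: nth_append)
    qed
    show "emeasure (measure_pmf (step (last xs))) ((\<lambda>c. xs @ [c]) -` ?E) = indA (last xs)"
      unfolding pre using emeas_Lout[of "last xs"]
      by (cases "last xs") (auto simp: indA_def split: loc.splits)
  qed
  also have "\<dots> = (\<integral>\<^sup>+c. indA c \<partial>X n0 j)" by (simp add: X_def)
  finally show ?thesis .
qed



definition U :: "conf \<Rightarrow> ennreal" where "U c = (if fst c = Lout then 0 else 1)"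
lemma half: "inverse (2::ennreal) = ennreal (1/2)"
  by (metis ennreal_numeral inverse_ennreal zero_less_numeral inverse_eq_divide)

lemma U_eq: "U c = indA c + (\<integral>\<^sup>+x. U x \<partial>step c)"
proof -
  have i2: "inverse (2::ennreal) + inverse 2 = 1"
    unfolding half by (subst ennreal_plus[symmetric]) auto
  show ?thesis by (cases c rule: step.cases) (auto simp: U_def indA_def i2)
qed

definition "psi = (1 - sqrt 5) / (2::real)"
definition "cc = 7 * (3 - sqrt 5) / (2::real)"
definition vr :: "int \<Rightarrow> real" where
  "vr n = (if n \<le> 0 then 0 else 7 * real_of_int n + cc * (1 - psi ^ nat n))"

lemma s5: "sqrt 5 * sqrt 5 = (5::real)" by simp
lemma s5b1: "2 < sqrt (5::real)"
  by (rule real_less_rsqrt) simp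
lemma s5b2: "sqrt 5 < (3::real)"
proof (rule ccontr)
  assume "\<not> sqrt 5 < (3::real)"
  then have "3*3 \<le> sqrt 5 * sqrt (5::real)" by (intro mult_mono) auto
  then show False using s5 by simp
qed
lemmas s5b = s5b1 s5b2

lemma psi_sq: "psi^2 = psi + 1"
  unfolding psi_def power2_eq_square using s5 by (simp add: field_simps) 

lemma psi_abs: "\<bar>psi\<bar> \<le> 1" using s5b unfolding psi_def by auto
lemma cc_nonneg: "0 \<le> cc" using s5b unfolding cc_def by auto

lemma vr_nonneg: "0 \<le> vr n"
proof -
  have "\<bar>psi ^ nat n\<bar> \<le> 1" using psi_abs by (simp add: power_abs power_le_one)
  then have "0 \<le> 1 - psi ^ nat n" by auto
  then show ?thesis unfolding vr_def using cc_nonneg by auto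
qed

lemma vr_rec: assumes "n \<ge> 1" shows "vr n = 7/2 + (vr (n+1) + vr (n-2)) / 2"
proof -
  have p3: "psi^3 = 2*psi + 1" using psi_sq by (simp add: power3_eq_cube power2_eq_square algebra_simps)
  consider "n = 1" | "n = 2" | "n \<ge> 3" using assms by linarith
  then show ?thesis
  proof cases
    case 1
    have "cc * (1 - psi)^2 = 7" unfolding cc_def psi_def power2_eq_square using s5
      by (simp add: field_simps) 
    then have h: "cc + cc*(psi*psi) = 7 + cc*(psi*2)" by (simp add: power2_eq_square algebra_simps)
    show ?thesis using 1 h by (simp add: vr_def power2_eq_square field_simps)
  next
    case 2
    have "1 - 2*psi^2 + psi^3 = 0" using p3 psi_sq by simp
    then have "cc * (1 - 2*psi^2 + psi^3) = 0" by simp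
    then have h: "cc + cc * psi ^ 3 = cc * (2 * psi\<^sup>2)" by (simp add: algebra_simps)
    show ?thesis using 2 h by (simp add: vr_def field_simps)
  next
    case 3
    define k where "k = nat (n - 2)"
    have k: "nat n = k + 2" "nat (n+1) = k + 3" "nat (n-2) = k" "n - 2 > 0" using 3 unfolding k_def by auto
    have "psi^k * (1 - 2*psi^2 + psi^3) = 0" using p3 psi_sq by simp
    then have h0: "psi ^ k + psi ^ k * psi ^ 3 = 2 * (psi ^ k * psi\<^sup>2)" by (simp add: algebra_simps)
    have h: "cc * psi^k + cc * (psi^k * psi^3) = 2 * (cc * (psi^k * psi\<^sup>2))"
      using arg_cong[OF h0, of "(*) cc"] by (simp add: algebra_simps)
    have e1: "psi ^ nat n = psi^k * psi^2" unfolding k(1) by (rule power_add)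
    have e2: "psi ^ nat (n+1) = psi^k * psi^3" unfolding k(2) by (rule power_add)
    have a: "vr n = 7 * real_of_int n + cc * (1 - psi^k * psi^2)"
      using 3 unfolding vr_def e1 by simp
    have b: "vr (n+1) = 7 * real_of_int n + 7 + cc * (1 - psi^k * psi^3)"
      using 3 unfolding vr_def e2 by simp
    have c: "vr (n-2) = 7 * real_of_int n - 14 + cc * (1 - psi^k)"
      using 3 k by (simp add: vr_def)
    show ?thesis unfolding a b c using h by (simp add: field_simps)
  qed
qed

fun Vr :: "conf \<Rightarrow> real" where
  "Vr (L0, n) = 1 + vr 1"
| "Vr (L1, n) = vr n"
| "Vr (L2, n) = 1 + (3 + vr (n+1) + vr (n-2)) / 2"
| "Vr (L3, n) = 1 + vr (n+1)"
| "Vr (L4, n) = 2 + vr (n-2)"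
| "Vr (L5, n) = 1 + vr (n-1)"
| "Vr (Lout, n) = 0"

lemma Vr_nonneg: "0 \<le> Vr c"
  using vr_nonneg by (cases c rule: Vr.cases) (auto intro: add_nonneg_nonneg)

definition V :: "conf \<Rightarrow> ennreal" where "V c = ennreal (Vr c)"

lemma V_eq: "V c = (\<integral>\<^sup>+x. U x + V x \<partial>step c)"
proof (cases c rule: step.cases)
  case (1 n)
  then show ?thesis by (simp add: U_def V_def vr_nonneg)
next
  case (2 n)
  show ?thesis
  proof (cases "n \<ge> 1")
    case True
    have "Vr (L1, n) = 1 + Vr (L2, n)" using vr_rec[OF True] by (simp add: field_simps)
    then have "V (L1,n) = 1 + V (L2, n)" unfolding V_def using Vr_nonneg[of "(L2,n)"] by (simp del: Vr.simps)
    then show ?thesis using 2 True by (simp add: U_def del: Vr.simps)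
  next
    case False
    then show ?thesis using 2 by (simp add: U_def V_def vr_def)
  qed
next
  case (3 n)
  have "V (L2,n) = ennreal ((1 + Vr (L3,n)) * (1/2) + (1 + Vr (L4,n)) * (1/2))"
    unfolding V_def by (rule arg_cong[where f=ennreal]) (simp add: field_simps)
  also have "\<dots> = (1 + V (L3,n)) * ennreal (1/2) + (1 + V (L4,n)) * ennreal (1/2)"
  proof -
    have a0: "0 \<le> Vr (L3,n)" "0 \<le> Vr (L4,n)" using Vr_nonneg[of "(L3,n)"] Vr_nonneg[of "(L4,n)"] by (simp_all del: Vr.simps)
    have a: "0 \<le> 1 + Vr (L3,n)" "0 \<le> 1 + Vr (L4,n)" using a0 by auto
    have "ennreal ((1 + Vr (L3,n)) * (1/2) + (1 + Vr (L4,n)) * (1/2))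
        = ennreal ((1 + Vr (L3,n)) * (1/2)) + ennreal ((1 + Vr (L4,n)) * (1/2))"
      by (rule ennreal_plus) (use vr_nonneg in \<open>simp_all add: add_nonneg_nonneg\<close>)
    also have "\<dots> = ennreal (1 + Vr (L3,n)) * ennreal (1/2) + ennreal (1 + Vr (L4,n)) * ennreal (1/2)"
      by (simp only: ennreal_mult[OF a(1)] ennreal_mult[OF a(2)] zero_le_divide_iff zero_le_one zero_le_numeral simp_thms)
    also have "\<dots> = (1 + V (L3,n)) * ennreal (1/2) + (1 + V (L4,n)) * ennreal (1/2)"
      unfolding V_def ennreal_plus[OF zero_le_one a0(1)] ennreal_plus[OF zero_le_one a0(2)] ennreal_1 ..
    finally show ?thesis .
  qed
  also have "\<dots> = (1 + V (L3,n)) * inverse 2 + (1 + V (L4,n)) * inverse 2" unfolding half ..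
  also have "\<dots> = (\<integral>\<^sup>+x. U x + V x \<partial>step c)" using 3 by (simp add: U_def)
  finally show ?thesis using 3 by simp
next
  case (4 n)
  then show ?thesis by (simp add: U_def V_def vr_nonneg)
next
  case (5 n)
  then show ?thesis by (simp add: U_def V_def vr_nonneg)
next
  case (6 n)
  then show ?thesis by (simp add: U_def V_def vr_nonneg)
next
  case (7 n)
  then show ?thesis by (simp add: U_def V_def)
qed



definition "th = (99/100::real)"
definition W1 :: "int \<Rightarrow> real" where "W1 n = (6/5) ^ nat (n+1)"

fun Wr :: "conf \<Rightarrow> real" where
  "Wr (L0, n) = W1 1 / th"
| "Wr (L1, n) = W1 n"
| "Wr (L2, n) = (W1 (n+1) / th + W1 (n-2) / th^2) / (2*th)"
| "Wr (L3, n) = W1 (n+1) / th"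
| "Wr (L4, n) = W1 (n-2) / th^2"
| "Wr (L5, n) = W1 (n-1) / th"
| "Wr (Lout, n) = 0"

lemma W1_ge: "1 \<le> W1 n" unfolding W1_def by simp
lemma W1_nonneg: "0 \<le> W1 n" using W1_ge[of n] by linarith

lemma th_props: "0 < th" "th < 1" unfolding th_def by auto

lemma div_th: "0 \<le> x \<Longrightarrow> x \<le> x / th"
  using th_props by (simp add: le_divide_eq mult_right_le_one_le)
lemma div_th2: "0 \<le> x \<Longrightarrow> x \<le> x / th^2"
proof -
  assume x: "0 \<le> x"
  have "0 < th^2" "th^2 \<le> 1" using th_props by (auto simp: power_le_one)
  then show ?thesis using x by (simp add: le_divide_eq mult_right_le_one_le)
qed
lemma div_2th: "0 \<le> x \<Longrightarrow> x / 2 \<le> x / (2*th)"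
  using th_props by (intro divide_left_mono) auto

lemma W2_ge: "(W1 a + W1 b) / 2 \<le> (W1 a / th + W1 b / th^2) / (2*th)"
proof -
  have "(W1 a + W1 b) / 2 \<le> (W1 a / th + W1 b / th^2) / 2"
    using div_th[OF W1_nonneg[of a]] div_th2[OF W1_nonneg[of b]] by (intro divide_right_mono add_mono) auto
  also have "\<dots> \<le> (W1 a / th + W1 b / th^2) / (2*th)"
    by (rule div_2th) (use W1_nonneg th_props in simp)
  finally show ?thesis .
qed

lemma Wr_ge: "fst c \<noteq> Lout \<Longrightarrow> 1 \<le> Wr c"
proof (cases c rule: Wr.cases)
  case (1 n) then show ?thesis using div_th[OF W1_nonneg[of 1]] W1_ge[of 1] by simp
next
  case (2 n) then show ?thesis using W1_ge[of n] by simp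
next
  case (3 n)
  have h: "1 \<le> (W1 (n+1) + W1 (n-2)) / 2" using W1_ge[of "n+1"] W1_ge[of "n-2"] by simp
  show ?thesis unfolding 3 Wr.simps using order.trans[OF h W2_ge] .
next
  case (4 n) then show ?thesis using div_th[OF W1_nonneg[of "n+1"]] W1_ge[of "n+1"] by simp
next
  case (5 n) then show ?thesis using div_th2[OF W1_nonneg[of "n-2"]] W1_ge[of "n-2"] by simp
next
  case (6 n) then show ?thesis using div_th[OF W1_nonneg[of "n-1"]] W1_ge[of "n-1"] by simp
qed simp

lemma Wr_nonneg: "0 \<le> Wr c"
  using Wr_ge[of c] by (cases c rule: Wr.cases) auto

fun Eg :: "(conf \<Rightarrow> real) \<Rightarrow> conf \<Rightarrow> real" where
  "Eg g (L0, n) = g (L1, 1)"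
| "Eg g (L1, n) = (if n \<ge> 1 then g (L2, n) else g (Lout, n))"
| "Eg g (L2, n) = (g (L3, n) + g (L4, n)) / 2"
| "Eg g (L3, n) = g (L1, n + 1)"
| "Eg g (L4, n) = g (L5, n - 1)"
| "Eg g (L5, n) = g (L1, n - 1)"
| "Eg g (Lout, n) = g (Lout, n)"

lemma step_int:
  assumes g: "\<And>x. 0 \<le> g x"
  shows "(\<integral>\<^sup>+x. ennreal (g x) \<partial>step c) = ennreal (Eg g c)"
proof (cases c rule: step.cases)
  case (3 n)
  have a: "0 \<le> g (L3,n)" "0 \<le> g (L4,n)" using g by auto
  have "(\<integral>\<^sup>+x. ennreal (g x) \<partial>step c) = ennreal (g (L3,n)) * inverse 2 + ennreal (g (L4,n)) * inverse 2"
    using 3 by simp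
  also have "\<dots> = ennreal (g (L3,n)) * ennreal (1/2) + ennreal (g (L4,n)) * ennreal (1/2)"
    unfolding half ..
  also have "\<dots> = ennreal (g (L3,n) * (1/2)) + ennreal (g (L4,n) * (1/2))"
    by (simp only: ennreal_mult[OF a(1)] ennreal_mult[OF a(2)] zero_le_divide_iff zero_le_one zero_le_numeral simp_thms)
  also have "\<dots> = ennreal (g (L3,n) * (1/2) + g (L4,n) * (1/2))"
    by (rule ennreal_plus[symmetric]) (simp_all add: a)
  also have "\<dots> = ennreal (Eg g c)" using 3 by (simp add: field_simps)
  finally show ?thesis .
qed (simp_all)

lemma Eg_Wr: "Eg Wr c \<le> th * Wr c"
proof (cases c rule: step.cases)
  case (2 n)
  show ?thesis
  proof (cases "n \<ge> 1")
    case True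
    define m where "m = nat (n - 1)"
    have m: "nat (n+1+1) = m + 3" "nat (n-2+1) = m" "nat (n+1) = m + 2" using True unfolding m_def by auto
    have k: "(6/5)^3 / th^2 + 1 / th^3 \<le> 2 * th * (6/5::real)^2" unfolding th_def by (simp add: field_simps power2_eq_square power3_eq_cube)
    define P where "P = (6/5::real)^m"
    have P: "0 < P" unfolding P_def by simp
    have w: "W1 (n+1) = P * (6/5)^3" "W1 (n-2) = P" "W1 n = P * (6/5)^2"
      unfolding W1_def P_def using m by (auto simp: power_add power2_eq_square)
    have "Wr (L2, n) = P * ((6/5)^3 / th^2 + 1 / th^3) / 2"
      unfolding Wr.simps w using th_props by (simp add: field_simps power2_eq_square power3_eq_cube)
    also have "\<dots> \<le> P * (2 * th * (6/5::real)^2) / 2"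
      using P k by (intro divide_right_mono mult_left_mono) auto
    also have "\<dots> = th * W1 n" unfolding w by (simp add: power2_eq_square)
    finally have "Wr (L2, n) \<le> th * Wr (L1, n)" by simp
    then show ?thesis using 2 True by simp
  next
    case False then show ?thesis using 2 th_props W1_ge[of n] by simp
  qed
qed (use th_props in \<open>simp_all add: field_simps power2_eq_square\<close>)

definition W :: "conf \<Rightarrow> ennreal" where "W c = ennreal (Wr c)"

lemma W_contr: "(\<integral>\<^sup>+x. W x \<partial>step c) \<le> ennreal th * W c"
proof -
  have "(\<integral>\<^sup>+x. W x \<partial>step c) = ennreal (Eg Wr c)" unfolding W_def by (rule step_int[OF Wr_nonneg])
  also have "\<dots> \<le> ennreal (th * Wr c)" by (rule ennreal_leI[OF Eg_Wr])
  also have "\<dots> = ennreal th * W c" unfolding W_def by (rule ennreal_mult) (use th_props Wr_nonneg in auto)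
  finally show ?thesis .
qed

lemma X_W: "(\<integral>\<^sup>+x. W x \<partial>X n0 k) \<le> ennreal (th ^ k) * W (L0, n0)"
proof (induction k)
  case 0 then show ?case by (simp add: X_0)
next
  case (Suc k)
  have "(\<integral>\<^sup>+x. W x \<partial>X n0 (Suc k)) = (\<integral>\<^sup>+c. (\<integral>\<^sup>+x. W x \<partial>step c) \<partial>X n0 k)"
    by (simp add: X_Suc)
  also have "\<dots> \<le> (\<integral>\<^sup>+c. ennreal th * W c \<partial>X n0 k)"
    by (rule nn_integral_mono) (rule W_contr)
  also have "\<dots> = ennreal th * (\<integral>\<^sup>+c. W c \<partial>X n0 k)"
    by (rule nn_integral_cmult) simp
  also have "\<dots> \<le> ennreal th * (ennreal (th ^ k) * W (L0, n0))"
    by (rule mult_left_mono[OF Suc.IH]) simp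
  also have "\<dots> = ennreal (th ^ Suc k) * W (L0, n0)"
    using th_props by (simp add: ennreal_mult mult.assoc)
  finally show ?case .
qed

lemma U_le_W: "U c \<le> W c"
proof -
  note Wr_ge[of c]
  then show ?thesis unfolding U_def W_def by (auto intro: ennreal_leI[where x=1, simplified])
qed

lemma bern: "1 + real m / 5 \<le> (6/5::real) ^ m"
proof (induction m)
  case (Suc m)
  have "1 + real (Suc m) / 5 \<le> (1 + real m / 5) * (6/5)" by (simp add: field_simps)
  also have "\<dots> \<le> (6/5) ^ m * (6/5)" using Suc by (intro mult_right_mono) auto
  finally show ?case by simp
qed simp

lemma vr_le: "vr n \<le> 35 * W1 n"
proof -
  have "\<bar>psi ^ nat n\<bar> \<le> 1" using psi_abs by (simp add: power_abs power_le_one)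
  then have a: "1 - psi ^ nat n \<le> 2" "0 \<le> 1 - psi ^ nat n" by (auto simp: abs_le_iff)
  have "cc \<le> 7/2" using s5b unfolding cc_def by auto
  then have h: "cc * (1 - psi ^ nat n) \<le> 7/2 * 2"
    using cc_nonneg a by (intro mult_mono) auto
  have "vr n \<le> 7 * real (nat (n+1))"
  proof (cases "n \<le> 0")
    case True then show ?thesis unfolding vr_def by simp
  next
    case False
    then have "real (nat (n+1)) = real_of_int n + 1" by simp
    then show ?thesis unfolding vr_def using False h by simp
  qed
  also have "\<dots> \<le> 35 * W1 n" using bern[of "nat (n+1)"] unfolding W1_def by auto
  finally show ?thesis .
qed

lemma Vr_le: "Vr c \<le> 40 * Wr c"
proof -
  note b = vr_le W1_ge th_props
  note t1 = div_th and t2 = div_th2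
  show ?thesis
  proof (cases c rule: Wr.cases)
    case (1 n)
    have "1 + vr 1 \<le> 36 * W1 1" using vr_le[of 1] W1_ge[of 1] by linarith
    also have "\<dots> \<le> 40 * (W1 1 / th)" using t1[of "W1 1"] W1_ge[of 1] by linarith
    finally show ?thesis using 1 by simp
  next
    case (2 n) then show ?thesis using vr_le[of n] W1_ge[of n] by simp
  next
    case (3 n)
    have "1 + (3 + vr (n + 1) + vr (n - 2)) / 2 \<le> 20 * W1 (n+1) + 20 * W1 (n-2)"
      using vr_le[of "n+1"] vr_le[of "n-2"] W1_ge[of "n+1"] W1_ge[of "n-2"] by (simp add: field_simps)
    also have "\<dots> = 40 * ((W1 (n+1) + W1 (n-2)) / 2)" by simp
    also have "\<dots> \<le> 40 * ((W1 (n+1) / th + W1 (n-2) / th^2) / (2*th))"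
      by (rule mult_left_mono[OF W2_ge]) simp
    finally show ?thesis using 3 by simp
  next
    case (4 n)
    have "1 + vr (n+1) \<le> 40 * W1 (n+1)" using vr_le[of "n+1"] W1_ge[of "n+1"] by linarith
    also have "\<dots> \<le> 40 * (W1 (n+1) / th)" using t1[of "W1 (n+1)"] W1_ge[of "n+1"] by linarith
    finally show ?thesis using 4 by simp
  next
    case (5 n)
    have "2 + vr (n-2) \<le> 40 * W1 (n-2)" using vr_le[of "n-2"] W1_ge[of "n-2"] by linarith
    also have "\<dots> \<le> 40 * (W1 (n-2) / th^2)" using t2[of "W1 (n-2)"] W1_ge[of "n-2"] by linarith
    finally show ?thesis using 5 by simp
  next
    case (6 n)
    have "1 + vr (n-1) \<le> 40 * W1 (n-1)" using vr_le[of "n-1"] W1_ge[of "n-1"] by linarith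
    also have "\<dots> \<le> 40 * (W1 (n-1) / th)" using t1[of "W1 (n-1)"] W1_ge[of "n-1"] by linarith
    finally show ?thesis using 6 by simp
  qed simp
qed

lemma V_le_W: "V c \<le> 40 * W c"
proof -
  have "ennreal (Vr c) \<le> ennreal (40 * Wr c)" by (rule ennreal_leI[OF Vr_le])
  also have "\<dots> = ennreal 40 * ennreal (Wr c)" by (rule ennreal_mult) (use Wr_nonneg in auto)
  finally show ?thesis unfolding V_def W_def by simp
qed



lemma tele:
  assumes "\<And>c. g c = f c + (\<integral>\<^sup>+x. g x \<partial>step c)"
  shows "(\<integral>\<^sup>+x. g x \<partial>X n0 k) = (\<integral>\<^sup>+x. f x \<partial>X n0 k) + (\<integral>\<^sup>+x. g x \<partial>X n0 (Suc k))"
proof -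
  have "(\<integral>\<^sup>+x. g x \<partial>X n0 k) = (\<integral>\<^sup>+c. f c + (\<integral>\<^sup>+x. g x \<partial>step c) \<partial>X n0 k)"
    by (subst assms) rule
  also have "\<dots> = (\<integral>\<^sup>+x. f x \<partial>X n0 k) + (\<integral>\<^sup>+c. (\<integral>\<^sup>+x. g x \<partial>step c) \<partial>X n0 k)"
    by (rule nn_integral_add) simp_all
  finally show ?thesis by (simp add: X_Suc)
qed

definition "uu n0 k = (\<integral>\<^sup>+x. U x \<partial>X n0 k)"
definition "vv n0 k = (\<integral>\<^sup>+x. V x \<partial>X n0 k)"
definition "aa n0 k = (\<integral>\<^sup>+x. indA x \<partial>X n0 k)"

lemma uu_step: "uu n0 k = aa n0 k + uu n0 (Suc k)"
  unfolding uu_def aa_def by (rule tele[OF U_eq])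

lemma vv_step: "vv n0 k = uu n0 (Suc k) + vv n0 (Suc k)"
proof -
  have "V c = (\<integral>\<^sup>+x. U x \<partial>step c) + (\<integral>\<^sup>+x. V x \<partial>step c)" for c
    by (subst V_eq) (rule nn_integral_add; simp)
  from tele[OF this] show ?thesis unfolding uu_def vv_def by (simp add: X_Suc)
qed

lemma sum1: "(\<Sum>j<N. aa n0 j) + uu n0 N = uu n0 0"
proof (induction N)
  case (Suc N)
  then show ?case using uu_step[of n0 N] by (simp add: add.assoc)
qed simp

lemma sum2: "(\<Sum>j<N. ennreal (real j + 2) * aa n0 j) + (ennreal (real N + 2) * uu n0 N + vv n0 N)
   = 2 * uu n0 0 + vv n0 0"
proof (induction N)
  case 0 then show ?case by simp
next
  case (Suc N)
  have a: "ennreal ((real N + 2) + 1) = ennreal (real N + 2) + ennreal 1" by (rule ennreal_plus) auto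
  have b: "real (Suc N) + 2 = (real N + 2) + 1" by simp
  have e: "ennreal (real (Suc N) + 2) = ennreal (real N + 2) + 1"
    using a unfolding b ennreal_1 .
  let ?c = "ennreal (real N + 2)"
  have "(\<Sum>j<Suc N. ennreal (real j + 2) * aa n0 j) + (ennreal (real (Suc N) + 2) * uu n0 (Suc N) + vv n0 (Suc N))
     = (\<Sum>j<N. ennreal (real j + 2) * aa n0 j) + (?c * (aa n0 N + uu n0 (Suc N)) + (uu n0 (Suc N) + vv n0 (Suc N)))"
    unfolding e by (simp add: algebra_simps)
  also have "\<dots> = (\<Sum>j<N. ennreal (real j + 2) * aa n0 j) + (?c * uu n0 N + vv n0 N)"
    using uu_step[of n0 N] vv_step[of n0 N] by simp
  also have "\<dots> = 2 * uu n0 0 + vv n0 0" by (rule Suc.IH)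
  finally show ?case .
qed

lemma uu_le: "uu n0 N \<le> ennreal (th ^ N) * W (L0, n0)"
  unfolding uu_def by (rule order.trans[OF nn_integral_mono[OF U_le_W] X_W])

lemma vv_le: "vv n0 N \<le> 40 * (ennreal (th ^ N) * W (L0, n0))"
proof -
  have "vv n0 N \<le> (\<integral>\<^sup>+x. 40 * W x \<partial>X n0 N)"
    unfolding vv_def by (rule nn_integral_mono[OF V_le_W])
  also have "\<dots> = 40 * (\<integral>\<^sup>+x. W x \<partial>X n0 N)" by (rule nn_integral_cmult) simp
  also have "\<dots> \<le> 40 * (ennreal (th ^ N) * W (L0, n0))" by (rule mult_left_mono[OF X_W]) simp
  finally show ?thesis .
qed

lemma lim0: "(\<lambda>N. ennreal ((real N + 42) * th ^ N * Wr (L0, n0))) \<longlonglongrightarrow> 0"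
proof -
  have "(\<lambda>N. (real N + 42) * (99/100) ^ N * w) \<longlonglongrightarrow> 0" for w :: real by real_asymp
  then show ?thesis unfolding th_def by (intro tendsto_ennrealI[where x=0, simplified])
qed

lemma err_le: "ennreal (real N + 2) * uu n0 N + vv n0 N \<le> ennreal ((real N + 42) * th ^ N * Wr (L0, n0))"
proof -
  define w where "w = Wr (L0, n0)"
  have w: "0 \<le> w" unfolding w_def by (rule Wr_nonneg)
  have t: "0 \<le> th ^ N" using th_props by simp
  have "ennreal (real N + 2) * uu n0 N + vv n0 N \<le> ennreal (real N + 2) * (ennreal (th ^ N) * ennreal w) + 40 * (ennreal (th ^ N) * ennreal w)"
    using uu_le[of n0 N] vv_le[of n0 N] unfolding W_def w_def by (intro add_mono mult_left_mono) auto
  also have "\<dots> = ennreal ((real N + 2) * (th ^ N * w)) + ennreal (40 * (th ^ N * w))"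
    using w t by (simp add: ennreal_mult)
  also have "\<dots> = ennreal ((real N + 2) * (th ^ N * w) + 40 * (th ^ N * w))"
    using w t by (simp add: ennreal_plus)
  also have "\<dots> = ennreal ((real N + 42) * th ^ N * w)" by (simp add: algebra_simps)
  finally show ?thesis unfolding w_def .
qed

lemma err_lim: "(\<lambda>N. ennreal (real N + 2) * uu n0 N + vv n0 N) \<longlonglongrightarrow> 0"
proof (rule tendsto_sandwich[OF _ _ tendsto_const lim0])
  show "\<forall>\<^sub>F n in sequentially. ennreal (real n + 2) * uu n0 n + vv n0 n \<le> ennreal ((real n + 42) * th ^ n * Wr (L0, n0))"
    by (intro always_eventually allI err_le)
qed simp

lemma uu_lim: "uu n0 \<longlonglongrightarrow> 0"
proof (rule tendsto_sandwich[OF _ _ tendsto_const err_lim[of n0]])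
  show "\<forall>\<^sub>F n in sequentially. uu n0 n \<le> ennreal (real n + 2) * uu n0 n + vv n0 n"
  proof (intro always_eventually allI)
    fix n
    have c: "(1::ennreal) \<le> ennreal (real n + 2)" using ennreal_leI[of 1 "real n + 2"] by simp
    have "1 * uu n0 n \<le> ennreal (real n + 2) * uu n0 n" by (rule mult_right_mono[OF c]) simp
    then have "uu n0 n \<le> ennreal (real n + 2) * uu n0 n" by simp
    then show "uu n0 n \<le> ennreal (real n + 2) * uu n0 n + vv n0 n" by (rule add_increasing2[rotated]) simp
  qed
qed simp

lemma lim_sum:
  fixes g :: "nat \<Rightarrow> ennreal"
  assumes "\<And>N. (\<Sum>k<N. g k) + e N = K" "e \<longlonglongrightarrow> 0"
  shows "suminf g = K"
proof -
  have "(\<lambda>N. (\<Sum>k<N. g k) + e N) \<longlonglongrightarrow> suminf g + 0"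
    by (intro tendsto_add summable_LIMSEQ assms(2)) simp
  then have "(\<lambda>N. K) \<longlonglongrightarrow> suminf g" using assms(1) by simp
  then show ?thesis by (rule LIMSEQ_unique[OF tendsto_const, symmetric])
qed



lemma sqrt5_irr: "sqrt 5 \<notin> \<rat>"
proof
  assume "sqrt 5 \<in> \<rat>"
  then obtain m n :: nat where n: "n \<noteq> 0" and sq: "\<bar>sqrt 5\<bar> = real m / real n" and cop: "coprime m n"
    by (rule Rats_abs_nat_div_natE)
  have p: "prime (5::nat)" by simp
  have "real m = sqrt 5 * real n" using sq n by (simp add: field_simps)
  then have "real (m^2) = 5 * real (n^2)" by (simp add: power_mult_distrib)
  then have eq: "m^2 = 5 * n^2" by (metis of_nat_eq_iff of_nat_mult of_nat_numeral)
  have "5 dvd m^2" using eq by simp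
  then have "5 dvd m" using p prime_dvd_power by blast
  then obtain k where k: "m = 5 * k" ..
  then have "n^2 = 5 * k^2" using eq by (simp add: power_mult_distrib)
  then have "5 dvd n^2" by simp
  then have "5 dvd n" using p prime_dvd_power by blast
  with \<open>5 dvd m\<close> cop show False
    by (metis coprime_common_divisor_nat numeral_eq_one_iff semiring_norm(86))
qed

lemma uu0: "uu n0 0 = 1" unfolding uu_def X_0 by (simp add: U_def)
lemma vv0: "vv n0 0 = ennreal (1 + vr 1)" unfolding vv_def X_0 by (simp add: V_def)

lemma shift_lim:
  fixes g :: "nat \<Rightarrow> ennreal"
  assumes g0: "g 0 = 0" and h: "\<And>M. (\<Sum>j<M. g (Suc j)) + e M = K" and e: "e \<longlonglongrightarrow> 0"
  shows "suminf g = K"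
proof (rule lim_sum)
  define e' where "e' N = (case N of 0 \<Rightarrow> K | Suc M \<Rightarrow> e M)" for N
  show "(\<Sum>k<N. g k) + e' N = K" for N
  proof (cases N)
    case 0 then show ?thesis by (simp add: e'_def)
  next
    case (Suc M) then show ?thesis using h[of M] g0 by (simp add: e'_def sum.lessThan_Suc_shift del: sum.lessThan_Suc)
  qed
  show "e' \<longlonglongrightarrow> 0"
    by (rule filterlim_sequentially_Suc[THEN iffD1]) (simp add: e'_def e)
qed

lemma Tsum: "(\<Sum>k. ennreal (T_prob n0 k)) = 1"
proof (rule shift_lim)
  show "ennreal (T_prob n0 0) = 0" by (simp add: T_prob_0)
  show "(\<Sum>j<M. ennreal (T_prob n0 (Suc j))) + uu n0 M = 1" for M
    using sum1[of n0 M] unfolding T_prob_Suc aa_def[symmetric] uu0 .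
  show "uu n0 \<longlonglongrightarrow> 0" by (rule uu_lim)
qed

lemma ETsum: "(\<Sum>k. ennreal (real (Suc k) * T_prob n0 k)) = 2 + ennreal (1 + vr 1)"
proof (rule shift_lim)
  show "ennreal (real (Suc 0) * T_prob n0 0) = 0" by (simp add: T_prob_0)
  have g: "ennreal (real (Suc (Suc j)) * T_prob n0 (Suc j)) = ennreal (real j + 2) * aa n0 j" for j
  proof -
    have "ennreal (real (Suc (Suc j)) * T_prob n0 (Suc j)) = ennreal (real j + 2) * ennreal (T_prob n0 (Suc j))"
      by (subst ennreal_mult') (auto simp: add.commute)
    then show ?thesis unfolding T_prob_Suc aa_def .
  qed
  show "(\<Sum>j<M. ennreal (real (Suc (Suc j)) * T_prob n0 (Suc j))) + (ennreal (real M + 2) * uu n0 M + vv n0 M) = 2 + ennreal (1 + vr 1)" for M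
    unfolding g using sum2[of n0 M] unfolding uu0 vv0 by simp
  show "(\<lambda>M. ennreal (real M + 2) * uu n0 M + vv n0 M) \<longlonglongrightarrow> 0" by (rule err_lim)
qed

lemma val_eq: "3 + vr 1 = (13 + 7 * sqrt 5) / 2"
proof -
  have "vr 1 = 7 + cc * (1 - psi)" unfolding vr_def by simp
  also have "\<dots> = 7 + 7 * (sqrt 5 - 1) / 2" unfolding cc_def psi_def using s5
    by (simp add: field_simps)
  finally show ?thesis by (simp add: field_simps)
qed

theorem mainTheorem13:
  fixes n0 :: int
  shows "terminates_as n0 \<and> (\<exists>r::real. ET n0 = ennreal r \<and> r \<notin> \<rat>)"
proof
  show "terminates_as n0" unfolding terminates_as_def by (rule Tsum)
  show "\<exists>r::real. ET n0 = ennreal r \<and> r \<notin> \<rat>"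
  proof (intro exI conjI)
    have "ET n0 = 2 + ennreal (1 + vr 1)" unfolding ET_def Tsum ETsum by simp
    also have "\<dots> = ennreal (3 + vr 1)" using vr_nonneg[of 1] by simp
    finally show "ET n0 = ennreal (3 + vr 1)" .
    show "3 + vr 1 \<notin> \<rat>"
    proof
      assume "3 + vr 1 \<in> \<rat>"
      then have "(2 * (3 + vr 1) - 13) / 7 \<in> \<rat>" by (intro Rats_divide Rats_diff Rats_mult) auto
      also have "(2 * (3 + vr 1) - 13) / 7 = sqrt 5" unfolding val_eq by (simp add: field_simps)
      finally show False using sqrt5_irr by simp
    qed
  qed
qed


end
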